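(* Let $\alpha\in[0,1)$, $K_\alpha(x,y)=\dfrac{1}{x^2+2\cos(\pi\alpha)xy+y^2}$, $Q_\alpha(x,y)=y+x\cos(\pi\alpha)$, and for integers $p\ge0$ $$T_{\alpha,2p}=(2p)!\sum_{k=0}^p(-1)^{p-k}\binom{p+k}{p-k}(4Q_\alpha^2)^kK_\alpha^{p+k+1},\qquad T_{\alpha,2p+1}=2(2p+1)!\,Q_\alpha\sum_{k=0}^p(-1)^{p+1-k}\binom{p+1+k}{p-k}(4Q_\alpha^2)^kK_\alpha^{p+k+2}.$$ Then for every $j\ge1$ and $r\ge0$, $$\frac{\partial^jT_{\alpha,r}}{\partial x^j}(1,0+)=(-1)^j\frac{(r+j+1)!}{(r+1)!}\,T_{\alpha,r}(1,0+).$$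
   Context: For a function $F(x,y)$ smooth on $(0,\infty)\times[0,\infty)$, $F(1,0+)$ denotes $\lim_{y\to0+}F(1,y)$. *)

theory Defs
  imports "HOL-Analysis.Analysis"
begin

definition K_alpha :: "real \<Rightarrow> real \<Rightarrow> real \<Rightarrow> real" where
  "K_alpha \<alpha> x y = 1 / (x^2 + 2 * cos (pi * \<alpha>) * x * y + y^2)"

definition Q_alpha :: "real \<Rightarrow> real \<Rightarrow> real \<Rightarrow> real" where
  "Q_alpha \<alpha> x y = y + x * cos (pi * \<alpha>)"

definition T_alpha :: "real \<Rightarrow> nat \<Rightarrow> real \<Rightarrow> real \<Rightarrow> real" where
  "T_alpha \<alpha> r x y =
    (if even r then
       (let p = r div 2 in
        fact (2*p) * (\<Sum>k=0..p. (-1)^(p-k) * real ((p+k) choose (p-k))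
            * (4 * (Q_alpha \<alpha> x y)^2)^k * (K_alpha \<alpha> x y)^(p+k+1)))
     else
       (let p = r div 2 in
        2 * fact (2*p+1) * Q_alpha \<alpha> x y * (\<Sum>k=0..p. (-1)^(p+1-k) * real ((p+1+k) choose (p-k))
            * (4 * (Q_alpha \<alpha> x y)^2)^k * (K_alpha \<alpha> x y)^(p+k+2))))"

end

theory Submission
  imports Defs
begin

definition DD :: "real \<Rightarrow> real \<Rightarrow> real \<Rightarrow> real" where
  "DD c x y = x^2 + 2*c*x*y + y^2"

fun tm :: "real \<Rightarrow> real \<times> nat \<times> nat \<times> nat \<Rightarrow> real \<Rightarrow> real \<Rightarrow> real" where
  "tm c (a,m,n,e) x y = a * x^m * y^n / DD c x y ^ e"

definition ev :: "real \<Rightarrow> (real \<times> nat \<times> nat \<times> nat) list \<Rightarrow> real \<Rightarrow> real \<Rightarrow> real" where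
  "ev c L x y = (\<Sum>t\<leftarrow>L. tm c t x y)"

fun tmul :: "real \<times> nat \<times> nat \<times> nat \<Rightarrow> real \<times> nat \<times> nat \<times> nat \<Rightarrow> real \<times> nat \<times> nat \<times> nat" where
  "tmul (a,m,n,e) (b,m',n',e') = (a*b, m+m', n+n', e+e')"

lemma tm_mul: "tm c (tmul t1 t2) x y = tm c t1 x y * tm c t2 x y"
  by (cases t1; cases t2) (simp add: power_add divide_inverse inverse_mult_distrib mult_ac)

definition mulL where "mulL L1 L2 = concat (map (\<lambda>t1. map (\<lambda>t2. tmul t1 t2) L2) L1)"

lemma ev_append: "ev c (L1 @ L2) x y = ev c L1 x y + ev c L2 x y"
  by (simp add: ev_def)

lemma ev_mul: "ev c (mulL L1 L2) x y = ev c L1 x y * ev c L2 x y"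
proof (induction L1)
  case Nil then show ?case by (simp add: ev_def mulL_def)
next
  case (Cons t L1)
  have "ev c (map (tmul t) L2) x y = tm c t x y * ev c L2 x y"
    by (induction L2) (simp_all add: ev_def tm_mul algebra_simps)
  then show ?case using Cons by (simp add: mulL_def ev_def algebra_simps)
qed

definition rep :: "real \<Rightarrow> (real \<Rightarrow> real \<Rightarrow> real) \<Rightarrow> bool" where
  "rep c f \<longleftrightarrow> (\<exists>L. \<forall>x y. f x y = ev c L x y)"

lemma rep_add: "rep c f \<Longrightarrow> rep c g \<Longrightarrow> rep c (\<lambda>x y. f x y + g x y)"
  unfolding rep_def by (metis ev_append)

lemma rep_mul: "rep c f \<Longrightarrow> rep c g \<Longrightarrow> rep c (\<lambda>x y. f x y * g x y)"
  unfolding rep_def by (metis ev_mul)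

lemma rep_const: "rep c (\<lambda>x y. a)"
  unfolding rep_def by (rule exI[of _ "[(a,0,0,0)]"]) (simp add: ev_def)

lemma rep_x: "rep c (\<lambda>x y. x)"
  unfolding rep_def by (rule exI[of _ "[(1,1,0,0)]"]) (simp add: ev_def)

lemma rep_y: "rep c (\<lambda>x y. y)"
  unfolding rep_def by (rule exI[of _ "[(1,0,1,0)]"]) (simp add: ev_def)

lemma rep_inv: "rep c (\<lambda>x y. 1 / DD c x y)"
  unfolding rep_def by (rule exI[of _ "[(1,0,0,1)]"]) (simp add: ev_def)

lemma rep_pow: "rep c f \<Longrightarrow> rep c (\<lambda>x y. f x y ^ n)"
  by (induction n) (simp_all add: rep_const rep_mul)

lemma rep_sum: "finite A \<Longrightarrow> (\<And>k. k \<in> A \<Longrightarrow> rep c (f k)) \<Longrightarrow> rep c (\<lambda>x y. \<Sum>k\<in>A. f k x y)"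
  by (induction A rule: finite_induct) (simp_all add: rep_const rep_add)

lemma rep_T: "rep (cos (pi*\<alpha>)) (T_alpha \<alpha> r)"
proof -
  have K: "rep (cos (pi*\<alpha>)) (K_alpha \<alpha>)"
    using rep_inv[of "cos (pi*\<alpha>)"] unfolding K_alpha_def DD_def by (simp add: mult.assoc)
  have Q: "rep (cos (pi*\<alpha>)) (Q_alpha \<alpha>)"
    unfolding Q_alpha_def by (intro rep_add rep_mul rep_x rep_y rep_const)
  show ?thesis
    unfolding T_alpha_def Let_def
    by (cases "even r"; simp only: if_True if_False; intro rep_mul rep_sum rep_pow rep_const K Q finite_atLeastAtMost)
qed


fun dtm :: "real \<Rightarrow> real \<times> nat \<times> nat \<times> nat \<Rightarrow> (real \<times> nat \<times> nat \<times> nat) list" where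
  "dtm c (a,m,n,e) = [(a*real m, m-1, n, e), (-(2*real e*a), Suc m, n, Suc e), (-(2*c*real e*a), m, Suc n, Suc e)]"

definition dL where "dL c L = concat (map (dtm c) L)"

lemma tm_deriv:
  assumes "DD c x y \<noteq> 0"
  shows "((\<lambda>x. tm c t x y) has_real_derivative ev c (dtm c t) x y) (at x)"
proof -
  obtain a m n e where t: "t = (a,m,n,e)" by (cases t) auto
  have dD: "((\<lambda>x. DD c x y) has_real_derivative 2*x + 2*c*y) (at x)"
    unfolding DD_def by (auto intro!: derivative_eq_intros)
  have "((\<lambda>x. a * x^m * y^n / DD c x y ^ e) has_real_derivative
     (a * (real m * x^(m-1)) * y^n * DD c x y ^ e - a * x^m * y^n * (real e * DD c x y ^ (e-1) * (2*x+2*c*y))) / (DD c x y ^ e * DD c x y ^ e)) (at x)"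
    using assms by (auto intro!: derivative_eq_intros dD)
  moreover have "(a * (real m * x^(m-1)) * y^n * DD c x y ^ e - a * x^m * y^n * (real e * DD c x y ^ (e-1) * (2*x+2*c*y))) / (DD c x y ^ e * DD c x y ^ e)
     = ev c (dtm c t) x y"
  proof -
    have e1: "real e * DD c x y ^ (e-1) = real e * DD c x y ^ e / DD c x y"
      using assms by (cases e) auto
    show ?thesis unfolding t ev_def e1 using assms
      by (simp add: field_simps power_add)
  qed
  ultimately show ?thesis unfolding t by simp
qed

lemma ev_deriv:
  assumes "DD c x y \<noteq> 0"
  shows "((\<lambda>x. ev c L x y) has_real_derivative ev c (dL c L) x y) (at x)"
proof (induction L)
  case Nil then show ?case by (simp add: ev_def dL_def)
next
  case (Cons t L)
  have "((\<lambda>x. tm c t x y + ev c L x y) has_real_derivative ev c (dtm c t) x y + ev c (dL c L) x y) (at x)"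
    by (intro DERIV_add tm_deriv assms Cons)
  then show ?case by (simp add: ev_def dL_def)
qed

lemma higher_deriv_open:
  fixes F :: "nat \<Rightarrow> real \<Rightarrow> real"
  assumes S: "open S" and f: "\<And>x. x \<in> S \<Longrightarrow> f x = F 0 x"
    and d: "\<And>n x. x \<in> S \<Longrightarrow> (F n has_real_derivative F (Suc n) x) (at x)"
  shows "x \<in> S \<Longrightarrow> (deriv ^^ n) f x = F n x"
proof (induction n arbitrary: x)
  case 0 then show ?case using f by simp
next
  case (Suc n)
  have "((deriv ^^ n) f has_real_derivative F (Suc n) x) (at x)"
    by (rule has_field_derivative_transform_within_open[OF d[OF Suc.prems] S Suc.prems])
       (simp add: Suc.IH)
  then show ?case by (simp add: DERIV_imp_deriv)
qed


lemma ev_tendsto: "((\<lambda>y. ev c L 1 y) \<longlongrightarrow> ev c L 1 0) (at_right 0)"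
proof (induction L)
  case Nil then show ?case by (simp add: ev_def)
next
  case (Cons t L)
  obtain a m n e where t: "t = (a,m,n,e)" by (cases t) auto
  have "((\<lambda>y. DD c 1 y) \<longlongrightarrow> DD c 1 0) (at_right 0)"
    unfolding DD_def by (intro tendsto_intros)
  then have "((\<lambda>y. tm c t 1 y) \<longlongrightarrow> tm c t 1 0) (at_right 0)"
    unfolding t tm.simps by (intro tendsto_intros) (auto simp: DD_def)
  then show ?case using Cons by (simp add: ev_def tendsto_add)
qed

lemma term_scale:
  fixes x c :: real
  assumes "x \<noteq> 0"
  shows "(4*(x*c)^2)^k * (1/x^2)^(q+k) = (4*c^2)^k * (1/x^2)^q"
  using assms by (simp add: power_add power_mult_distrib field_simps flip: power_mult)

lemma T_zero:
  assumes "x \<noteq> 0"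
  shows "T_alpha \<alpha> r x 0 = T_alpha \<alpha> r 1 0 / x^(r+2)"
proof (cases "even r")
  case True
  then obtain p where r: "r = 2*p" by auto
  have "T_alpha \<alpha> r x 0 = fact (2*p) * (\<Sum>k=0..p. (-1)^(p-k) * real ((p+k) choose (p-k))
            * (4 * (x * cos (pi*\<alpha>))^2)^k * (1/x^2)^((p+1)+k))"
    unfolding T_alpha_def K_alpha_def Q_alpha_def r by (simp add: Let_def add_ac)
  also have "\<dots> = fact (2*p) * (\<Sum>k=0..p. (-1)^(p-k) * real ((p+k) choose (p-k))
            * (4 * (cos (pi*\<alpha>))^2)^k) * (1/x^2)^(p+1)"
    unfolding mult.assoc[of "fact (2*p)"] sum_distrib_right
    by (intro arg_cong[where f="\<lambda>s. fact (2*p) * s"] sum.cong refl)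
       (simp only: mult.assoc term_scale[OF assms])
  also have "T_alpha \<alpha> r 1 0 = fact (2*p) * (\<Sum>k=0..p. (-1)^(p-k) * real ((p+k) choose (p-k))
            * (4 * (cos (pi*\<alpha>))^2)^k)"
    unfolding T_alpha_def K_alpha_def Q_alpha_def r by (simp add: Let_def)
  moreover have "(1/x^2)^(p+1) = 1 / x^(2*p+2)"
    by (metis power_one_over power_mult mult_2 add_mult_distrib2 mult_1_right nat_mult_1_right mult.commute)
  ultimately show ?thesis unfolding r by (metis times_divide_eq_right mult_1_right)
next
  case False
  then obtain p where r: "r = 2*p+1" by (metis oddE)
  have "T_alpha \<alpha> r x 0 = 2 * fact (2*p+1) * (x * cos (pi*\<alpha>)) * (\<Sum>k=0..p. (-1)^(p+1-k) * real ((p+1+k) choose (p-k))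
            * (4 * (x * cos (pi*\<alpha>))^2)^k * (1/x^2)^((p+2)+k))"
    unfolding T_alpha_def K_alpha_def Q_alpha_def r by (simp add: Let_def add_ac)
  also have "\<dots> = 2 * fact (2*p+1) * cos (pi*\<alpha>) * (\<Sum>k=0..p. (-1)^(p+1-k) * real ((p+1+k) choose (p-k))
            * (4 * (cos (pi*\<alpha>))^2)^k) * (x * (1/x^2)^(p+2))"
  proof -
    have "\<And>k. (-1)^(p+1-k) * real ((p+1+k) choose (p-k)) * (4 * (x * cos (pi*\<alpha>))^2)^k * (1/x^2)^((p+2)+k)
       = (-1)^(p+1-k) * real ((p+1+k) choose (p-k)) * (4 * (cos (pi*\<alpha>))^2)^k * (1/x^2)^(p+2)"
      by (simp only: mult.assoc term_scale[OF assms])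
    then have "(\<Sum>k=0..p. (-1)^(p+1-k) * real ((p+1+k) choose (p-k)) * (4 * (x * cos (pi*\<alpha>))^2)^k * (1/x^2)^((p+2)+k))
      = (\<Sum>k=0..p. (-1)^(p+1-k) * real ((p+1+k) choose (p-k)) * (4 * (cos (pi*\<alpha>))^2)^k) * (1/x^2)^(p+2)"
      by (simp only: sum_distrib_right)
    then show ?thesis by (simp only:) (simp only: mult_ac)
  qed
  also have "T_alpha \<alpha> r 1 0 = 2 * fact (2*p+1) * cos (pi*\<alpha>) * (\<Sum>k=0..p. (-1)^(p+1-k) * real ((p+1+k) choose (p-k))
            * (4 * (cos (pi*\<alpha>))^2)^k)"
    unfolding T_alpha_def K_alpha_def Q_alpha_def r by (simp add: Let_def)
  moreover have "x * (1/x^2)^(p+2) = 1 / x^(2*p+1+2)"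
  proof -
    have "(1/x^2)^(p+2) = 1 / x^(2*p+4)"
    proof -
      have "(x^2)^(p+2) = x^(2*(p+2))" by (simp only: power_mult)
      moreover have "2*(p+2) = 2*p+4" by simp
      ultimately show ?thesis by (metis power_one_over)
    qed
    moreover have "x^(2*p+4) = x * x^(2*p+1+2)"
    proof -
      have "2*p+4 = Suc (2*p+1+2)" by simp
      then show ?thesis by (simp only: power_Suc)
    qed
    ultimately show ?thesis using assms by simp
  qed
  ultimately show ?thesis unfolding r by (metis times_divide_eq_right mult_1_right)
qed


lemma inv_pow_deriv:
  fixes x B :: real
  assumes "x \<noteq> 0"
  shows "((\<lambda>x. B / x^N) has_real_derivative -(B*real N)/x^(Suc N)) (at x)"
proof -
  have "((\<lambda>x. B / x^N) has_real_derivative - (B * (real N * x^(N-1))) / (x^N * x^N)) (at x)"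
    using assms by (auto intro!: derivative_eq_intros)
  moreover have "- (B * (real N * x^(N-1))) / (x^N * x^N) = -(B*real N)/x^(Suc N)"
  proof (cases N)
    case 0 then show ?thesis by simp
  next
    case (Suc M) then show ?thesis using assms by (simp add: field_simps)
  qed
  ultimately show ?thesis by simp
qed

lemma pow_deriv:
  assumes "x \<noteq> 0"
  shows "((\<lambda>x. A * (-1)^n * (fact (r+n+1) / fact (r+1)) / x^(r+2+n)) has_real_derivative
          A * (-1)^(Suc n) * (fact (r+Suc n+1) / fact (r+1)) / x^(r+2+Suc n)) (at x)"
proof -
  have f: "fact (r+Suc n+1) = real (r+2+n) * (fact (r+n+1) :: real)"
    by (simp add: algebra_simps)
  have eq: "- (A * (-1)^n * (fact (r+n+1) / fact (r+1)) * real (r+2+n)) / x^(Suc (r+2+n))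
      = A * (-1)^(Suc n) * (fact (r+Suc n+1) / fact (r+1)) / x^(r+2+Suc n)"
    unfolding f by simp
  show ?thesis using inv_pow_deriv[OF assms, of "A * (-1)^n * (fact (r+n+1) / fact (r+1))" "r+2+n"]
    unfolding eq .
qed

theorem lemma2:
  fixes \<alpha> :: real and j r :: nat
  assumes "0 \<le> \<alpha>" and "\<alpha> < 1" and "j \<ge> 1"
  shows "\<exists>L. ((\<lambda>y. T_alpha \<alpha> r 1 y) \<longlongrightarrow> L) (at_right 0) \<and>
             ((\<lambda>y. (deriv ^^ j) (\<lambda>x. T_alpha \<alpha> r x y) 1) \<longlongrightarrow>
                (-1)^j * (fact (r+j+1) / fact (r+1)) * L) (at_right 0)"
proof -
  define c where "c = cos (pi*\<alpha>)"
  have "cos pi < cos (pi*\<alpha>)"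
    by (rule cos_monotone_0_pi) (use assms in auto)
  then have c1: "c > -1" by (simp add: c_def)
  obtain L0 where L0: "\<And>x y. T_alpha \<alpha> r x y = ev c L0 x y"
    using rep_T[of \<alpha> r] unfolding rep_def c_def by blast
  have Dy: "DD c 1 y \<noteq> 0" if "y \<ge> 0" for y
  proof (cases "y = 0")
    case True then show ?thesis by (simp add: DD_def)
  next
    case False
    then have "c*y > -1*y" using c1 that by (intro mult_strict_right_mono) auto
    then have "2*c*y > -2*y" by simp
    moreover have "(1-y)^2 \<ge> 0" by simp
    ultimately have "DD c 1 y > 0" unfolding DD_def by (simp add: power2_eq_square algebra_simps)
    then show ?thesis by simp
  qed
  have hd: "(deriv ^^ j) (\<lambda>x. T_alpha \<alpha> r x y) 1 = ev c ((dL c ^^ j) L0) 1 y" if "y \<ge> 0" for y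
  proof (rule higher_deriv_open[where S="{x. DD c x y \<noteq> 0}" and F="\<lambda>n x. ev c ((dL c ^^ n) L0) x y"])
    show "open {x. DD c x y \<noteq> 0}"
      by (rule open_Collect_neq) (auto simp: DD_def intro!: continuous_intros)
    show "\<And>x. x \<in> {x. DD c x y \<noteq> 0} \<Longrightarrow> T_alpha \<alpha> r x y = ev c ((dL c ^^ 0) L0) x y"
      by (simp add: L0)
    show "\<And>n x. x \<in> {x. DD c x y \<noteq> 0} \<Longrightarrow> ((\<lambda>x. ev c ((dL c ^^ n) L0) x y) has_real_derivative ev c ((dL c ^^ Suc n) L0) x y) (at x)"
      by (simp add: ev_deriv)
    show "1 \<in> {x. DD c x y \<noteq> 0}" using Dy[OF that] by simp
  qed
  define L where "L = T_alpha \<alpha> r 1 0"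
  have h0: "(deriv ^^ j) (\<lambda>x. T_alpha \<alpha> r x 0) 1 = L * (-1)^j * (fact (r+j+1) / fact (r+1)) / 1^(r+2+j)"
  proof (rule higher_deriv_open[where S="{x. x \<noteq> 0}" and F="\<lambda>n x. L * (-1)^n * (fact (r+n+1) / fact (r+1)) / x^(r+2+n)"])
    show "open {x::real. x \<noteq> 0}" by (simp add: open_Collect_neq)
    show "\<And>x. x \<in> {x. x \<noteq> 0} \<Longrightarrow> T_alpha \<alpha> r x 0 = L * (-1)^0 * (fact (r+0+1) / fact (r+1)) / x^(r+2+0)"
    proof -
      fix x :: real assume "x \<in> {x. x \<noteq> 0}"
      then have "T_alpha \<alpha> r x 0 = L / x^(r+2)" unfolding L_def by (intro T_zero) simp
      then show "T_alpha \<alpha> r x 0 = L * (-1)^0 * (fact (r+0+1) / fact (r+1)) / x^(r+2+0)" by simp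
    qed
    show "\<And>n x. x \<in> {x. x \<noteq> 0} \<Longrightarrow> ((\<lambda>x. L * (-1)^n * (fact (r+n+1) / fact (r+1)) / x^(r+2+n)) has_real_derivative
          L * (-1)^(Suc n) * (fact (r+Suc n+1) / fact (r+1)) / x^(r+2+Suc n)) (at x)"
      by (simp only: mem_Collect_eq) (rule pow_deriv)
  qed simp
  show ?thesis
  proof (intro exI conjI)
    show "((\<lambda>y. T_alpha \<alpha> r 1 y) \<longlongrightarrow> L) (at_right 0)"
      unfolding L_def L0 by (rule ev_tendsto)
    have "((\<lambda>y. ev c ((dL c ^^ j) L0) 1 y) \<longlongrightarrow> ev c ((dL c ^^ j) L0) 1 0) (at_right 0)"
      by (rule ev_tendsto)
    moreover have "ev c ((dL c ^^ j) L0) 1 0 = (-1)^j * (fact (r+j+1) / fact (r+1)) * L"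
      using hd[of 0] h0 by (simp add: mult_ac)
    moreover have "\<forall>\<^sub>F y in at_right 0. ev c ((dL c ^^ j) L0) 1 y = (deriv ^^ j) (\<lambda>x. T_alpha \<alpha> r x y) 1"
      using hd by (intro eventually_at_rightI[of 0 1]) auto
    ultimately show "((\<lambda>y. (deriv ^^ j) (\<lambda>x. T_alpha \<alpha> r x y) 1) \<longlongrightarrow>
                (-1)^j * (fact (r+j+1) / fact (r+1)) * L) (at_right 0)"
      using tendsto_cong by fastforce
  qed
qed

end
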